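(* Let $\Sigma$ be an alphabet with $|\Sigma|\geq 3$ and $n\geq 1$. If $g\colon\mathcal{T}(\Sigma)^n\to\mathcal{T}(\Sigma)$ is WCP, then there exists a polynomial $P_g(x_1,\ldots,x_n)$ such that $g(\vec u)=\widetilde{P_g}(\vec u)$ for all $\vec u\in\Sigma^n$.
   Context: Let $\Sigma$ be an alphabet not containing $0,1$. A binary tree over $\Sigma$ is a finite set $t \subseteq \{0,1\}^*\Sigma$ such that for any $ua, vb \in t$ with $ua \neq vb$, $u$ is not a prefix of $v$ and $v$ is not a prefix of $u$; $\mathcal{T}(\Sigma)$ is the set of such trees, $\mathbf 0=\emptyset$, each letter $a$ is identified with $\{a\}$, and $t\star t' = 0.t\cup 1.t'$. Every map $h\colon\Sigma\to\mathcal{T}(\Sigma)$ extends uniquely to an endomorphism of $\langle\mathcal{T}(\Sigma),\star\rangle$, still denoted $h$. A function $g\colon\mathcal{T}(\Sigma)^n\to\mathcal{T}(\Sigma)$ is WCP if for every idempotent mapping $h\colon\Sigma\to\Sigma$ and all $\vec u,\vec v\in\Sigma^n$, $h(\vec u)=h(\vec v)$ implies $h(g(\vec u))=h(g(\vec v))$, where $h(\langle u_1,\ldots,u_n\rangle)=\langle h(u_1),\ldots,h(u_n)\rangle$. Let $x_1,\ldots,x_n\notin\Sigma$ be variables. A polynomial $P(x_1,\ldots,x_n)$ is a tree over the alphabet $\Sigma\cup\{x_1,\ldots,x_n\}$; its polynomial function $\widetilde P\colon\mathcal{T}(\Sigma)^n\to\mathcal{T}(\Sigma)$ is defined, for $\vec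 u=\langle t_1,\ldots,t_n\rangle$, by $\widetilde P(\vec u)=P$ if $P=\mathbf 0$ or $P\in\Sigma$; $\widetilde P(\vec u)=t_i$ if $P=x_i$; $\widetilde P(\vec u)=\widetilde{P_1}(\vec u)\star\widetilde{P_2}(\vec u)$ if $P=P_1\star P_2$. *)

theory Defs
  imports Main "HOL-Library.Sublist"
begin

text \<open>A word of {0,1}*Sigma is represented as a pair (address, letter), with
  the address a bool list (False = 0, True = 1).\<close>
type_synonym 'a tree = "(bool list \<times> 'a) set"

definition is_tree :: "'a tree \<Rightarrow> bool" where
  "is_tree t \<longleftrightarrow> finite t \<and>
     (\<forall>(u, a) \<in> t. \<forall>(v, b) \<in> t. (u, a) \<noteq> (v, b) \<longrightarrow> \<not> prefix u v \<and> \<not> prefix v u)"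

definition leaf :: "'a \<Rightarrow> 'a tree" where
  "leaf a = {([], a)}"

definition star :: "'a tree \<Rightarrow> 'a tree \<Rightarrow> 'a tree" where
  "star t t' = {(False # u, a) | u a. (u, a) \<in> t} \<union> {(True # u, a) | u a. (u, a) \<in> t'}"

definition hom :: "('a \<Rightarrow> 'b tree) \<Rightarrow> 'a tree \<Rightarrow> 'b tree" where
  "hom h t = {(u @ v, b) | u a v b. (u, a) \<in> t \<and> (v, b) \<in> h a}"

definition is_WCP :: "nat \<Rightarrow> ('a tree list \<Rightarrow> 'a tree) \<Rightarrow> bool" where
  "is_WCP n g \<longleftrightarrow>
     (\<forall>h :: 'a \<Rightarrow> 'a. h \<circ> h = h \<longrightarrow>
        (\<forall>us vs. length us = n \<longrightarrow> length vs = n \<longrightarrow> map h us = map h vs \<longrightarrow>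
           hom (leaf \<circ> h) (g (map leaf us)) = hom (leaf \<circ> h) (g (map leaf vs))))"

text \<open>Polynomials in variables x_1..x_n: trees over 'a + nat, where Inr i is
  the variable x_(i+1), i < n.\<close>
definition is_poly :: "nat \<Rightarrow> ('a + nat) tree \<Rightarrow> bool" where
  "is_poly n P \<longleftrightarrow> is_tree P \<and> (\<forall>(w, s) \<in> P. \<forall>i. s = Inr i \<longrightarrow> i < n)"

definition poly_fun :: "('a + nat) tree \<Rightarrow> 'a tree list \<Rightarrow> 'a tree" where
  "poly_fun P ts = hom (\<lambda>s. case s of Inl a \<Rightarrow> leaf a | Inr i \<Rightarrow> ts ! i) P"

end

theory Submission imports Defs begin

locale core =
  fixes f :: "'a list \<Rightarrow> 'a" and n :: nat
  assumes three: "\<And>x y :: 'a. \<exists>z. z \<noteq> x \<and> z \<noteq> y"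
    and pres: "\<And>X u v. X \<noteq> {} \<Longrightarrow> length u = n \<Longrightarrow> length v = n \<Longrightarrow>
       (\<forall>j<n. u!j = v!j \<or> (u!j \<in> X \<and> v!j \<in> X)) \<Longrightarrow> f u = f v \<or> (f u \<in> X \<and> f v \<in> X)"
begin

lemma other: "\<exists>y::'a. y \<noteq> x" using three by blast

lemma conservative_or_const:
  assumes "\<not> (\<exists>c. \<forall>u. length u = n \<longrightarrow> f u = c)"
  shows "\<forall>u. length u = n \<longrightarrow> f u \<in> set u"
proof (rule ccontr)
  assume "\<not> ?thesis"
  then obtain u0 where u0: "length u0 = n" "f u0 \<notin> set u0" by blast
  define c where "c = f u0"
  obtain d where d: "d \<noteq> c" using other by blast
  have A: "f v = c" if "length v = n" "c \<notin> set v" for v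
  proof -
    have "f u0 = f v \<or> (f u0 \<in> insert d (set u0 \<union> set v) \<and> f v \<in> insert d (set u0 \<union> set v))"
      by (rule pres) (use that u0 in \<open>auto simp: nth_mem\<close>)
    then show ?thesis using u0 d that unfolding c_def by auto
  qed
  have "f v = c" if v: "length v = n" for v
  proof -
    have B: "f v = c \<or> f v = e" if "e \<noteq> c" for e
    proof -
      define v' where "v' = map (\<lambda>y. if y = c then e else y) v"
      have "f v' = c" by (rule A) (use v that in \<open>auto simp: v'_def\<close>)
      moreover have "f v = f v' \<or> (f v \<in> {c, e} \<and> f v' \<in> {c,e})"
        by (rule pres) (use v in \<open>auto simp: v'_def\<close>)
      ultimately show ?thesis by auto
    qed
    obtain e where e: "e \<noteq> c" "e \<noteq> d" using three by blast
    show ?thesis using B[OF d] B[OF e(1)] e by auto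
  qed
  then show False using assms by blast
qed

lemma one_letter:
  assumes "length u = n" "length v = n" "\<forall>j<n. (u!j = x \<longleftrightarrow> v!j = x)"
  shows "f u = x \<longleftrightarrow> f v = x"
proof -
  have "f u = f v \<or> (f u \<in> -{x} \<and> f v \<in> -{x})"
    by (rule pres) (use assms other in auto)
  then show ?thesis by auto
qed

definition e :: "nat set \<Rightarrow> 'a \<Rightarrow> 'a \<Rightarrow> 'a list" where
  "e A x y = map (\<lambda>j. if j \<in> A then x else y) [0..<n]"

lemma e_len[simp]: "length (e A x y) = n" by (simp add: e_def)
lemma e_nth[simp]: "j < n \<Longrightarrow> e A x y ! j = (if j \<in> A then x else y)" by (simp add: e_def)
lemma e_set: "set (e A x y) \<subseteq> {x, y}" by (auto simp: e_def)

context
  assumes cons: "\<forall>u. length u = n \<longrightarrow> f u \<in> set u"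
begin

lemma swap:
  assumes "x \<noteq> y" "z \<noteq> y" "x \<noteq> z"
  shows "f (e A x y) = x \<longleftrightarrow> f (e A z y) = z"
proof -
  have 1: "f (e A x y) \<in> {x, y}" "f (e A z y) \<in> {z, y}" using cons e_set e_len by blast+
  have "f (e A x y) = f (e A z y) \<or> (f (e A x y) \<in> {x, z} \<and> f (e A z y) \<in> {x, z})"
    by (rule pres) auto
  then show ?thesis using 1 assms by auto
qed

definition W where "W A \<longleftrightarrow> (\<exists>a b. a \<noteq> b \<and> f (e A a b) = a)"

lemma oneW: "x \<noteq> y \<Longrightarrow> x' \<noteq> y' \<Longrightarrow> f (e A x y) = x \<longleftrightarrow> f (e A x' y') = x'"
proof -
  have L: "f (e A x y) = x \<longleftrightarrow> f (e A x y') = x" if "x \<noteq> y" "x \<noteq> y'" for x y y'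
    by (rule one_letter) (use that in auto)
  assume a: "x \<noteq> y" "x' \<noteq> y'"
  show ?thesis
  proof (cases "x = x'")
    case True then show ?thesis using L a by blast
  next
    case False
    obtain z where z: "z \<noteq> x" "z \<noteq> x'" using three by blast
    have "f (e A x y) = x \<longleftrightarrow> f (e A x z) = x" using L a z by metis
    also have "\<dots> \<longleftrightarrow> f (e A x' z) = x'" using swap z False by metis
    also have "\<dots> \<longleftrightarrow> f (e A x' y') = x'" using L a z by metis
    finally show ?thesis .
  qed
qed

lemma Wgen: "x \<noteq> y \<Longrightarrow> W A \<longleftrightarrow> f (e A x y) = x"
  unfolding W_def using oneW by blast

lemma fW:
  assumes "length u = n"
  shows "f u = x \<longleftrightarrow> W {j. j < n \<and> u!j = x}"
proof -
  obtain y where y: "y \<noteq> x" using other by blast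
  have "f u = x \<longleftrightarrow> f (e {j. j < n \<and> u!j = x} x y) = x"
    by (rule one_letter) (use assms y in auto)
  then show ?thesis using Wgen[OF y[symmetric]] by simp
qed

lemma tri:
  assumes "A \<subseteq> {..<n}" "B \<subseteq> {..<n}" "A \<inter> B = {}"
  shows "(W A \<and> \<not> W B \<and> \<not> W ({..<n} - A - B)) \<or> (\<not> W A \<and> W B \<and> \<not> W ({..<n} - A - B))
       \<or> (\<not> W A \<and> \<not> W B \<and> W ({..<n} - A - B))"
proof -
  obtain a b :: 'a where ab: "a \<noteq> b" using other by metis
  obtain c where c: "c \<noteq> a" "c \<noteq> b" using three by blast
  define u where "u = map (\<lambda>j. if j\<in>A then a else if j \<in> B then b else c) [0..<n]"
  have len: "length u = n" by (simp add: u_def)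
  have un: "u!j = (if j\<in>A then a else if j \<in> B then b else c)" if "j < n" for j
    using that by (simp add: u_def)
  have "f u \<in> set u" using cons len by blast
  moreover have "set u \<subseteq> {a,b,c}" by (auto simp: u_def)
  ultimately have fu: "f u \<in> {a,b,c}" by blast
  have sa: "{j. j < n \<and> u!j = a} = A" using assms ab c by (auto simp: un subset_iff split: if_split_asm)
  have sb: "{j. j < n \<and> u!j = b} = B" using assms ab c by (auto simp: un subset_iff split: if_split_asm)
  have sc: "{j. j < n \<and> u!j = c} = {..<n} - A - B" using assms ab c by (auto simp: un subset_iff split: if_split_asm)
  have wa: "f u = a \<longleftrightarrow> W A" using fW[OF len, of a] sa by simp
  have wb: "f u = b \<longleftrightarrow> W B" using fW[OF len, of b] sb by simp
  have wc: "f u = c \<longleftrightarrow> W ({..<n} - A - B)" using fW[OF len, of c] sc by simp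
  from fu have "f u = a \<or> f u = b \<or> f u = c" by simp
  then show ?thesis
  proof (elim disjE)
    assume h: "f u = a"
    then show ?thesis using wa wb wc ab c by simp
  next
    assume h: "f u = b"
    then show ?thesis using wa wb wc ab c by simp
  next
    assume h: "f u = c"
    then show ?thesis using wa wb wc ab c by simp
  qed
qed

lemma W_empty: "\<not> W {}" and W_full: "W {..<n}"
proof -
  have t: "{..<n} - {} - {} = {..<n}" by simp
  have "\<not> W {} \<and> W {..<n}" using tri[of "{}" "{}"] unfolding t by blast
  then show "\<not> W {}" "W {..<n}" by blast+
qed

lemma W_compl: "A \<subseteq> {..<n} \<Longrightarrow> W A \<longleftrightarrow> \<not> W ({..<n} - A)"
proof -
  assume a: "A \<subseteq> {..<n}"
  have eq: "{..<n} - A - ({..<n} - A) = {}" by auto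
  show ?thesis using tri[of A "{..<n} - A"] W_empty a unfolding eq by blast
qed

lemma exists_i: "\<exists>i<n. W {i}"
proof (rule ccontr)
  assume H: "\<not> ?thesis"
  have "W {k..<n}" if "k \<le> n" for k
    using that
  proof (induction k)
    case 0 then show ?case using W_full by (simp add: atLeast0LessThan)
  next
    case (Suc k)
    have k: "k < n" using Suc.prems by simp
    have 1: "W {k..<n}" using Suc.IH k by simp
    have e2: "{..<n} - {k..<n} = {..<k}" using k by (rule_tac set_eqI) auto
    have sub: "{k..<n} \<subseteq> {..<n}" by auto
    have 2: "\<not> W {..<k}" using W_compl[OF sub] 1 unfolding e2 by simp
    have 3: "\<not> W {k}" using H k by blast
    have eq: "{..<n} - {k} - {Suc k..<n} = {..<k}" using k by auto
    have T: "(W {k} \<and> \<not> W {Suc k..<n} \<and> \<not> W ({..<n} - {k} - {Suc k..<n})) \<or> (\<not> W {k} \<and> W {Suc k..<n} \<and> \<not> W ({..<n} - {k} - {Suc k..<n}))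
       \<or> (\<not> W {k} \<and> \<not> W {Suc k..<n} \<and> W ({..<n} - {k} - {Suc k..<n}))"
      by (rule tri) (use k in auto)
    show ?case using T 2 3 unfolding eq by blast
  qed
  from this[of n] have "W {n..<n}" by simp
  then show False using W_empty by simp
qed

lemma proj: "\<exists>i<n. \<forall>u. length u = n \<longrightarrow> f u = u!i"
proof -
  obtain i where i: "i < n" "W {i}" using exists_i by blast
  have WA: "W A" if "i \<in> A" "A \<subseteq> {..<n}" for A
  proof -
    have eq: "{..<n} - {i} - (A - {i}) = {..<n} - A" using that by auto
    have "\<not> W ({..<n} - A)" using tri[of "{i}" "A - {i}"] i that unfolding eq by auto
    then show ?thesis using W_compl that by blast
  qed
  show ?thesis
  proof (intro exI[of _ i] conjI allI impI)
    fix u :: "'a list" assume "length u = n"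
    then show "f u = u!i" using fW[of u "u!i"] WA[of "{j. j < n \<and> u!j = u!i}"] i by auto
  qed (rule i)
qed

end

lemma main: "(\<exists>c. \<forall>u. length u = n \<longrightarrow> f u = c) \<or> (\<exists>i<n. \<forall>u. length u = n \<longrightarrow> f u = u!i)"
proof (cases "\<exists>c. \<forall>u. length u = n \<longrightarrow> f u = c")
  case False
  show ?thesis by (rule disjI2, rule proj, rule conservative_or_const[OF False])
qed simp

end

lemma leaf_tree: "is_tree (leaf a)"
  by (simp add: is_tree_def leaf_def)

lemma tree_fun: "is_tree t \<Longrightarrow> (w, a) \<in> t \<Longrightarrow> (w, b) \<in> t \<Longrightarrow> a = b"
  unfolding is_tree_def by fastforce

lemma hom_leaf: "hom (leaf \<circ> h) t = {(w, h a) | w a. (w, a) \<in> t}"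
  by (auto simp: hom_def leaf_def)

theorem mainTheorem10:
  fixes g :: "'a tree list \<Rightarrow> 'a tree" and n :: nat
  assumes "finite (UNIV :: 'a set)" and "card (UNIV :: 'a set) \<ge> 3"
    and "n \<ge> 1"
    and "\<forall>ts. length ts = n \<and> (\<forall>t \<in> set ts. is_tree t) \<longrightarrow> is_tree (g ts)"
    and "is_WCP n g"
  shows "\<exists>P. is_poly n P \<and> (\<forall>us. length us = n \<longrightarrow> g (map leaf us) = poly_fun P (map leaf us))"
proof -
  note fin = assms(1) and card3 = assms(2) and gtree = assms(4) and wcp = assms(5)
  have three: "\<exists>z. z \<noteq> x \<and> z \<noteq> y" for x y :: 'a
  proof (rule ccontr)
    assume "\<not> ?thesis"
    then have "UNIV \<subseteq> {x, y}" by auto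
    then have "card (UNIV :: 'a set) \<le> card {x, y}" by (rule card_mono[rotated]) simp
    also have "\<dots> \<le> 2" by (simp add: card_insert_le_m1)
    finally show False using card3 by simp
  qed
  then obtain c0 :: 'a where True by blast
  define G where "G us = g (map leaf us)" for us
  have Gt: "is_tree (G us)" if "length us = n" for us
  proof -
    have "\<forall>t\<in>set (map leaf us). is_tree t" by (auto simp: leaf_tree)
    then show ?thesis using gtree that unfolding G_def by simp
  qed
  have W: "hom (leaf \<circ> h) (G us) = hom (leaf \<circ> h) (G vs)"
    if "h \<circ> h = h" "length us = n" "length vs = n" "map h us = map h vs" for h us vs
    using wcp that unfolding is_WCP_def G_def by blast
  define S where "S = fst ` G (replicate n c0)"
  have shape: "fst ` G us = S" if "length us = n" for us
  proof -
    have "hom (leaf \<circ> (\<lambda>_. c0)) (G us) = hom (leaf \<circ> (\<lambda>_. c0)) (G (replicate n c0))"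
      by (rule W) (use that in \<open>auto simp: map_replicate_const\<close>)
    then have "{(w, c0) | w a. (w, a) \<in> G us} = {(w, c0) | w a. (w, a) \<in> G (replicate n c0)}"
      unfolding hom_leaf .
    then have "fst ` {(w, c0) | w a. (w, a) \<in> G us} = fst ` {(w, c0) | w a. (w, a) \<in> G (replicate n c0)}"
      by simp
    moreover have "fst ` {(w, c0) | w a. (w, a) \<in> T} = fst ` T" for T :: "'a tree"
      by force
    ultimately show ?thesis unfolding S_def by simp
  qed
  define F where "F w us = (THE a. (w, a) \<in> G us)" for w us
  have Fin: "(w, F w us) \<in> G us" if ws: "w \<in> S" and ul: "length us = n" for w us
  proof -
    obtain a where a: "(w, a) \<in> G us" using shape[OF ul] ws by force
    have "F w us = a" unfolding F_def
      by (rule the_equality) (use a tree_fun[OF Gt[OF ul]] in blast)+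
    then show ?thesis using a by simp
  qed
  have Fu: "a = F w us" if "(w, a) \<in> G us" "length us = n" for w a us
  proof -
    have "w \<in> S" using shape[OF that(2)] that(1) by force
    then show ?thesis using Fin that tree_fun[OF Gt[OF that(2)]] by blast
  qed
  have Geq: "G us = {(w, F w us) | w. w \<in> S}" if "length us = n" for us
  proof -
    have inS: "w \<in> S" if "(w, a) \<in> G us" for w a using shape[OF \<open>length us = n\<close>] that by force
    show ?thesis
    proof (rule set_eqI)
      fix p :: "bool list \<times> 'a"
      obtain w a where p: "p = (w, a)" by force
      show "p \<in> G us \<longleftrightarrow> p \<in> {(w, F w us) | w. w \<in> S}"
        unfolding p using inS Fin Fu that by blast
    qed
  qed
  have dich: "(\<exists>c. \<forall>u. length u = n \<longrightarrow> F w u = c) \<or> (\<exists>i<n. \<forall>u. length u = n \<longrightarrow> F w u = u!i)"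
    if w: "w \<in> S" for w
  proof -
    interpret core "F w" n
    proof
      show "\<exists>z. z \<noteq> x \<and> z \<noteq> y" for x y :: 'a by (rule three)
    next
      fix X u v
      assume X: "X \<noteq> {}" and len: "length (u::'a list) = n" "length v = n"
        and uv: "\<forall>j<n. u!j = v!j \<or> (u!j \<in> X \<and> v!j \<in> X)"
      obtain x0 where x0: "x0 \<in> X" using X by blast
      define h where "h y = (if y \<in> X then x0 else y)" for y
      have hh: "h \<circ> h = h" using x0 by (auto simp: h_def)
      have "map h u = map h v" using len uv by (intro nth_equalityI) (auto simp: h_def)
      then have E: "hom (leaf \<circ> h) (G u) = hom (leaf \<circ> h) (G v)" using W hh len by blast
      have "(w, h (F w u)) \<in> hom (leaf \<circ> h) (G u)" unfolding hom_leaf using Fin[OF w len(1)] by blast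
      then have "(w, h (F w u)) \<in> hom (leaf \<circ> h) (G v)" using E by simp
      then obtain b where b: "(w, b) \<in> G v" "h b = h (F w u)" unfolding hom_leaf by auto
      have "b = F w v" using Fu b(1) len(2) by blast
      then have "h (F w v) = h (F w u)" using b by simp
      then show "F w u = F w v \<or> (F w u \<in> X \<and> F w v \<in> X)"
        unfolding h_def using x0 by (auto split: if_splits)
    qed
    show ?thesis by (rule main)
  qed
  define sy where "sy w = (if \<exists>c. \<forall>u. length u = n \<longrightarrow> F w u = c
      then Inl (SOME c. \<forall>u. length u = n \<longrightarrow> F w u = c)
      else Inr (SOME i. i < n \<and> (\<forall>u. length u = n \<longrightarrow> F w u = u!i)))" for w
  define ev where "ev s u = (case s of Inl c \<Rightarrow> c | Inr i \<Rightarrow> u ! i)" for s :: "'a + nat" and u :: "'a list"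
  have sy_ok: "(\<forall>u. length u = n \<longrightarrow> ev (sy w) u = F w u) \<and> (\<forall>i. sy w = Inr i \<longrightarrow> i < n)"
    if w: "w \<in> S" for w
  proof (cases "\<exists>c. \<forall>u. length u = n \<longrightarrow> F w u = c")
    case True
    define cc where "cc = (SOME c. \<forall>u. length u = n \<longrightarrow> F w u = c)"
    have c1: "\<forall>u. length u = n \<longrightarrow> F w u = cc"
      unfolding cc_def using True by (rule someI_ex)
    have c2: "sy w = Inl cc" unfolding sy_def cc_def using True by simp
    show ?thesis using c1 unfolding c2 ev_def by simp
  next
    case False
    then have ex: "\<exists>i. i < n \<and> (\<forall>u. length u = n \<longrightarrow> F w u = u!i)" using dich[OF w] by blast
    define ii where "ii = (SOME i. i < n \<and> (\<forall>u. length u = n \<longrightarrow> F w u = u!i))"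
    have i1: "ii < n \<and> (\<forall>u. length u = n \<longrightarrow> F w u = u!ii)"
      unfolding ii_def using someI_ex[OF ex] .
    have i2: "sy w = Inr ii" unfolding sy_def ii_def using False by simp
    show ?thesis using i1 unfolding i2 ev_def by simp
  qed
  define P where "P = (\<lambda>w. (w, sy w)) ` S"
  define u0 where "u0 = replicate n c0"
  have u0len: "length u0 = n" by (simp add: u0_def)
  have finS: "finite S" unfolding S_def using Gt[of "replicate n c0"] by (simp add: is_tree_def)
  have polyP: "is_poly n P"
    unfolding is_poly_def is_tree_def
  proof (intro conjI)
    show "finite P" using finS by (simp add: P_def)
    show "\<forall>(u, a)\<in>P. \<forall>(v, b)\<in>P. (u, a) \<noteq> (v, b) \<longrightarrow> \<not> prefix u v \<and> \<not> prefix v u"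
    proof -
      have key: "\<not> prefix u v" if u: "u \<in> S" and v: "v \<in> S" and ne: "u \<noteq> v" for u v
      proof -
        have "(u, F u u0) \<noteq> (v, F v u0)" using ne by simp
        moreover have "(u, F u u0) \<in> G u0" "(v, F v u0) \<in> G u0" using Fin u v u0len by auto
        ultimately show ?thesis using Gt[OF u0len] unfolding is_tree_def by fast
      qed
      show ?thesis using key by (force simp: P_def)
    qed
    show "\<forall>(w, s)\<in>P. \<forall>i. s = Inr i \<longrightarrow> i < n" using sy_ok by (auto simp: P_def)
  qed
  have "g (map leaf us) = poly_fun P (map leaf us)" if len: "length us = n" for us
  proof -
    have K: "(case s of Inl a \<Rightarrow> leaf a | Inr i \<Rightarrow> map leaf us ! i) = leaf (ev s us)"
      if "(w, s) \<in> P" for w s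
    proof -
      have ws: "w \<in> S" "s = sy w" using that by (auto simp: P_def)
      have lt: "\<forall>i. s = Inr i \<longrightarrow> i < n" using sy_ok[OF ws(1)] ws(2) by simp
      show ?thesis
      proof (cases s)
        case (Inl c) then show ?thesis by (simp add: ev_def)
      next
        case (Inr i) then have "i < length us" using lt len by simp
        then show ?thesis using Inr by (simp add: ev_def)
      qed
    qed
    have "poly_fun P (map leaf us) = {(w @ v, b) | w s v b. (w, s) \<in> P \<and> (v, b) \<in> leaf (ev s us)}"
      unfolding poly_fun_def hom_def using K by blast
    also have "\<dots> = {(w, ev (sy w) us) | w. w \<in> S}"
      by (auto simp: leaf_def P_def)
    also have "\<dots> = {(w, F w us) | w. w \<in> S}" using sy_ok len by auto
    also have "\<dots> = g (map leaf us)" using Geq[OF len] unfolding G_def by simp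
    finally show ?thesis by simp
  qed
  then show ?thesis using polyP by blast
qed

end
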